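(* Let $n\ge0$, $\alpha\ge1$ be integers, $N=2^{n+1}$, $c=2^\alpha+1$, and consider the $c$-DAG over the uniform dataset $\{0,\dots,N-1\}$ (described in the context). Let $s$ be a real number with $1<s\le N$, $\kappa=\lfloor\log_2(N/s)\rfloor$ (so $2^{n-\kappa}<s\le2^{n-\kappa+1}$), $u=2^{n-\kappa+1}/(c-1)$, and let $Q=[x,x+s)$ with $x\in[0,N-s]$. Then $\mathrm{level}_{c\text{-DAG}}(Q)\in\{\kappa-1,\kappa\}$. More precisely, $\mathrm{level}_{c\text{-DAG}}(Q)=\kappa$ if $Q$ is contained in a level-$\kappa$ node, i.e. if \[ x\in\bigcup_{m=0}^{(c-1)2^{\kappa}-(c-1)}\bigl[mu,\ (m+c-1)u-s\bigr]; \] otherwise $\mathrm{level}_{c\text{-DAG}}(Q)=\kappa-1$, and this is the case exactly for \[ x\in\bigcup_{m=0}^{(c-1)2^{\kappa}-c}\bigl((m+c-1)u-s,\ (m+1)u\bigr). \]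
   Context: The $c$-DAG over $\mathcal{D}=\{0,\dots,N-1\}\subset[0,N)$ has levels $\ell=0,\dots,n+1$; with $u_\ell=2^{n-\ell+1}/(c-1)$, its level-$\ell$ nodes are the $(c-1)2^\ell-(c-2)$ intervals $[mu_\ell,\,mu_\ell+2^{n-\ell+1})$, $m=0,1,\dots,(c-1)2^\ell-(c-1)$ (a node $[a,a+L)$ has the $c$ children $[a+jL/(2(c-1)),\,a+jL/(2(c-1))+L/2)$, $j=0,\dots,c-1$). SRC-search returns a node of the deepest level whose interval contains $Q$; $\mathrm{level}_{c\text{-DAG}}(Q)$ is the largest $\ell$ such that some level-$\ell$ node contains $Q$. *)

theory Defs
  imports Complex_Main
begin

text \<open>The c-DAG over the dataset {0,...,N-1}, N = 2^(n+1), viewed as half-open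
real intervals.\<close>

definition cdag_unit :: "nat \<Rightarrow> nat \<Rightarrow> nat \<Rightarrow> real" where
  "cdag_unit n c l = 2 ^ (n + 1 - l) / (real c - 1)"

definition cdag_node :: "nat \<Rightarrow> nat \<Rightarrow> nat \<Rightarrow> nat \<Rightarrow> real set" where
  "cdag_node n c l m =
     {real m * cdag_unit n c l ..< real m * cdag_unit n c l + 2 ^ (n + 1 - l)}"

definition cdag_nodes :: "nat \<Rightarrow> nat \<Rightarrow> nat \<Rightarrow> real set set" where
  "cdag_nodes n c l =
     (if l \<le> n + 1 then {cdag_node n c l m | m. m \<le> (c - 1) * 2 ^ l - (c - 1)} else {})"

definition cdag_level :: "nat \<Rightarrow> nat \<Rightarrow> real set \<Rightarrow> nat" where
  "cdag_level n c Q = (GREATEST l. l \<le> n + 1 \<and> (\<exists>I\<in>cdag_nodes n c l. Q \<subseteq> I))"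

end

theory Submission
  imports Defs
begin

lemma cont_iff:
  fixes x s a L :: real
  assumes "0 < s"
  shows "({x..<x+s} \<subseteq> {a..<a+L}) \<longleftrightarrow> (a \<le> x \<and> x+s \<le> a+L)"
proof
  assume h: "{x..<x+s} \<subseteq> {a..<a+L}"
  have "x \<in> {x..<x+s}" using assms by simp
  hence 1: "a \<le> x" using h by auto
  have "x + s \<le> a + L"
  proof (rule ccontr)
    assume "\<not> x + s \<le> a + L"
    hence "max x (a+L) \<in> {x..<x+s}" using assms by auto
    thus False using h by auto
  qed
  thus "a \<le> x \<and> x+s \<le> a+L" using 1 by simp
qed auto

lemma P_iff:
  assumes "l \<le> n+1" "0 < s"
  shows "(\<exists>I\<in>cdag_nodes n c l. {x..<x+s} \<subseteq> I) \<longleftrightarrow>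
    (\<exists>m::nat. m \<le> (c-1)*2^l-(c-1) \<and> real m * cdag_unit n c l \<le> x \<and>
        x + s \<le> real m * cdag_unit n c l + 2^(n+1-l))"
  using assms by (auto simp: cdag_nodes_def cdag_node_def cont_iff)

lemma P_high:
  assumes "(2::real)^(n+1-l) < s" "0 < s"
  shows "\<not>(\<exists>I\<in>cdag_nodes n c l. {x..<x+s} \<subseteq> I)"
proof (cases "l \<le> n+1")
  case True
  show ?thesis unfolding P_iff[OF True assms(2)] using assms(1) by auto
next
  case False
  thus ?thesis by (simp add: cdag_nodes_def)
qed

lemma unit_mult:
  assumes "c \<ge> 3"
  shows "(real c - 1) * cdag_unit n c l = 2^(n+1-l)"
  using assms by (simp add: cdag_unit_def)

lemma M_eq:
  assumes "c \<ge> 3" "l \<le> n+1"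
  shows "real ((c-1)*2^l-(c-1)) * cdag_unit n c l + 2^(n+1-l) = 2^(n+1)"
proof -
  have "(c-1)*2^l \<ge> (c-1)" by simp
  hence "real ((c-1)*2^l-(c-1)) = real ((c-1)*2^l) - real (c-1)"
    by (rule of_nat_diff)
  also have "\<dots> = (real c - 1) * 2^l - (real c - 1)" using assms by (simp add: of_nat_diff)
  finally have "real ((c-1)*2^l-(c-1)) = (real c - 1) * 2^l - (real c - 1)" .
  moreover have "(2::real)^(n+1-l) = (real c - 1) * cdag_unit n c l" using unit_mult[OF assms(1)] by simp
  moreover have "\<And>A C U::real. A = C * 2^l - C \<Longrightarrow> A * U + C * U = 2^l * (C * U)"
  proof -
    fix A C U :: real assume "A = C * 2^l - C"
    have "A * U + C * U = (A + C) * U" by (rule distrib_right[symmetric])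
    also have "(A + C) * U = (C * 2^l) * U" using \<open>A = C * 2^l - C\<close> by simp
    finally show "A * U + C * U = 2^l * (C * U)" by (simp add: mult_ac)
  qed
  ultimately have "real ((c-1)*2^l-(c-1)) * cdag_unit n c l + 2^(n+1-l)
     = 2^l * ((real c - 1) * cdag_unit n c l)" by metis
  also have "\<dots> = 2^l * 2^(n+1-l)" using unit_mult[OF assms(1)] by simp
  also have "\<dots> = (2::real)^(n+1)" using assms(2) by (simp flip: power_add)
  finally show ?thesis .
qed

lemma P_cover:
  assumes "c \<ge> 3" "l \<le> n+1" "0 < s" "2*s \<le> 2^(n+1-l)" "0 \<le> x" "x + s \<le> 2^(n+1)"
  shows "\<exists>I\<in>cdag_nodes n c l. {x..<x+s} \<subseteq> I"
proof -
  define U where "U = cdag_unit n c l"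
  define L :: real where "L = 2^(n+1-l)"
  define M where "M = (c-1)*2^l-(c-1)"
  have UL: "(real c - 1) * U = L" unfolding U_def L_def by (rule unit_mult[OF assms(1)])
  have U0: "U > 0" unfolding U_def cdag_unit_def using assms(1) by simp
  have U2: "2 * U \<le> L" using UL U0 assms(1)
    by (metis mult_right_mono less_imp_le of_nat_le_iff of_nat_numeral diff_le_mono add_le_imp_le_diff
        numeral_Bit1 numeral_One one_add_one of_nat_add of_nat_1)
  have MLe: "real M * U + L = 2^(n+1)" unfolding M_def U_def L_def by (rule M_eq[OF assms(1,2)])
  define f where "f = nat \<lfloor>x / U\<rfloor>"
  have f1: "real f * U \<le> x"
  proof -
    have "real f = of_int \<lfloor>x/U\<rfloor>" unfolding f_def using assms(5) U0 by simp
    also have "\<dots> \<le> x / U" by simp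
    finally show ?thesis using U0 by (simp add: pos_le_divide_eq)
  qed
  have f2: "x < real f * U + U"
  proof -
    have "real f = of_int \<lfloor>x/U\<rfloor>" unfolding f_def using assms(5) U0 by simp
    hence "x / U < real f + 1" by linarith
    thus ?thesis using U0 by (simp add: divide_less_eq algebra_simps)
  qed
  show ?thesis
  proof (cases "M \<le> f")
    case True
    have "real M * U \<le> real f * U" using True U0 by simp
    hence "real M * U \<le> x \<and> x + s \<le> real M * U + L" using f1 MLe assms(6) by linarith
    thus ?thesis unfolding P_iff[OF assms(2,3)] M_def U_def L_def by blast
  next
    case False
    have "real f * U \<le> x \<and> x + s \<le> real f * U + L" using f1 f2 U2 assms(4) unfolding L_def by linarith
    thus ?thesis unfolding P_iff[OF assms(2,3)] U_def L_def using False M_def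
      by (metis less_or_eq_imp_le not_le)
  qed
qed

lemma gap_iff:
  fixes u x s L :: real and M :: int
  assumes u0: "u > 0" and x0: "x \<ge> 0" and xs: "x + s \<le> of_int M * u + L" and M0: "M \<ge> 0"
  shows "(\<not>(\<exists>m::int. 0 \<le> m \<and> m \<le> M \<and> of_int m * u \<le> x \<and> x + s \<le> of_int m * u + L)) \<longleftrightarrow>
    (\<exists>m::int. 0 \<le> m \<and> m \<le> M - 1 \<and> of_int m * u + L - s < x \<and> x < of_int (m+1) * u)"
proof
  assume nc: "\<not>(\<exists>m::int. 0 \<le> m \<and> m \<le> M \<and> of_int m * u \<le> x \<and> x + s \<le> of_int m * u + L)"
  define f where "f = \<lfloor>x / u\<rfloor>"
  have f0: "f \<ge> 0" unfolding f_def using x0 u0 by simp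
  have f1: "of_int f * u \<le> x"
  proof -
    have "of_int f \<le> x / u" unfolding f_def by simp
    thus ?thesis using u0 by (simp add: pos_le_divide_eq)
  qed
  have f2: "x < of_int (f+1) * u"
  proof -
    have "x / u < of_int f + 1" unfolding f_def by linarith
    thus ?thesis using u0 by (simp add: divide_less_eq algebra_simps)
  qed
  show "\<exists>m::int. 0 \<le> m \<and> m \<le> M - 1 \<and> of_int m * u + L - s < x \<and> x < of_int (m+1) * u"
  proof (cases "M \<le> f")
    case True
    have "of_int M * u \<le> of_int f * u" using True u0 by simp
    hence False using nc f1 xs M0 by force
    thus ?thesis ..
  next
    case False
    have "\<not> (x + s \<le> of_int f * u + L)" using nc f0 f1 False by force
    thus ?thesis using f0 f2 False by (intro exI[of _ f]) auto
  qed
next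
  assume "\<exists>m::int. 0 \<le> m \<and> m \<le> M - 1 \<and> of_int m * u + L - s < x \<and> x < of_int (m+1) * u"
  then obtain m where m: "0 \<le> m" "of_int m * u + L - s < x" "x < of_int (m+1) * u" by blast
  show "\<not>(\<exists>m::int. 0 \<le> m \<and> m \<le> M \<and> of_int m * u \<le> x \<and> x + s \<le> of_int m * u + L)"
  proof
    assume "\<exists>m::int. 0 \<le> m \<and> m \<le> M \<and> of_int m * u \<le> x \<and> x + s \<le> of_int m * u + L"
    then obtain m' where m': "of_int m' * u \<le> x" "x + s \<le> of_int m' * u + L" by blast
    show False
    proof (cases "m' \<le> m")
      case True
      hence "of_int m' * u \<le> of_int m * u" using u0 by simp
      thus False using m m' by linarith
    next
      case False
      hence "of_int (m+1) * u \<le> of_int m' * u" using u0 by simp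
      thus False using m m' by linarith
    qed
  qed
qed

theorem lemma1:
  fixes n \<alpha> N c :: nat and s x u :: real and \<kappa> :: int
  assumes "\<alpha> \<ge> 1"
    and "N = 2 ^ (n + 1)"
    and "c = 2 ^ \<alpha> + 1"
    and "1 < s" and "s \<le> real N"
    and "\<kappa> = \<lfloor>log 2 (real N / s)\<rfloor>"
    and "u = 2 powr (real_of_int (int n - \<kappa> + 1)) / (real c - 1)"
    and "0 \<le> x" and "x \<le> real N - s"
  shows "int (cdag_level n c {x..<x + s}) \<in> {\<kappa> - 1, \<kappa>} \<and>
         (int (cdag_level n c {x..<x + s}) = \<kappa> \<longleftrightarrow>
           (\<exists>I\<in>cdag_nodes n c (nat \<kappa>). {x..<x + s} \<subseteq> I)) \<and>
         (int (cdag_level n c {x..<x + s}) = \<kappa> \<longleftrightarrow>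
           (\<exists>m::int. 0 \<le> m \<and> m \<le> (int c - 1) * 2 ^ nat \<kappa> - (int c - 1) \<and>
              real_of_int m * u \<le> x \<and> x \<le> real_of_int (m + int c - 1) * u - s)) \<and>
         (int (cdag_level n c {x..<x + s}) = \<kappa> - 1 \<longleftrightarrow>
           (\<exists>m::int. 0 \<le> m \<and> m \<le> (int c - 1) * 2 ^ nat \<kappa> - int c \<and>
              real_of_int (m + int c - 1) * u - s < x \<and> x < real_of_int (m + 1) * u))"
proof -
  define Q where "Q = {x..<x+s}"
  define P where "P l = (\<exists>I\<in>cdag_nodes n c l. Q \<subseteq> I)" for l
  have a2: "(2::nat)^\<alpha> \<ge> 2^1" by (rule power_increasing) (use assms(1) in auto)
  hence c3: "c \<ge> 3" using assms(3) by simp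
  have s0: "s > 0" using assms(4) by simp
  have N1: "real N / s \<ge> 1" using assms(5) s0 by simp
  have Ns: "real N / s > 0" using N1 by simp
  have fl: "2 powr real_of_int \<kappa> \<le> real N / s \<and> real N / s < 2 powr real_of_int (\<kappa> + 1)"
    using floor_log_eq_powr_iff[OF Ns, of 2 \<kappa>] assms(6) by simp
  have "log 2 (real N / s) \<ge> 0" using N1 by simp
  hence k0: "\<kappa> \<ge> 0" using assms(6) by simp
  define k where "k = nat \<kappa>"
  have kk: "\<kappa> = int k" unfolding k_def using k0 by simp
  have p1: "2 powr real_of_int \<kappa> = (2::real)^k" unfolding kk by (simp add: powr_realpow)
  have p2: "2 powr real_of_int (\<kappa>+1) = (2::real)^(k+1)" unfolding kk
    by (metis of_int_of_nat_eq of_nat_Suc Suc_eq_plus1 powr_realpow zero_less_numeral int_ops(4))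
  have h1: "2^k * s \<le> real N" using fl p1 s0 by (simp add: pos_le_divide_eq)
  have h2: "real N < 2^(k+1) * s" using fl p2 s0 by (simp add: divide_less_eq)
  have NN: "real N = 2^(n+1)" using assms(2) by simp
  have kn: "k \<le> n"
  proof (rule ccontr)
    assume "\<not> k \<le> n"
    hence "(2::real)^(n+1) \<le> 2^k" by (intro power_increasing) auto
    moreover have "(2::real)^k < 2^k * s" using assms(4) by simp
    ultimately show False using h1 NN by linarith
  qed
  define L :: real where "L = 2^(n+1-k)"
  have NL: "real N = 2^k * L" unfolding L_def NN using kn by (simp flip: power_add)
  have sL: "s \<le> L" using h1 NL by simp
  have Ls: "L < 2 * s" using h2 NL by simp
  have uu: "u = cdag_unit n c k"
  proof -
    have "real_of_int (int n - \<kappa> + 1) = real (n+1-k)" using kk kn by simp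
    hence "2 powr real_of_int (int n - \<kappa> + 1) = (2::real)^(n+1-k)" by (simp add: powr_realpow)
    thus ?thesis using assms(7) by (simp add: cdag_unit_def)
  qed
  have uL: "(real c - 1) * u = L" unfolding uu L_def by (rule unit_mult[OF c3])
  have u0: "u > 0" unfolding uu cdag_unit_def using c3 by simp
  have xs: "x + s \<le> 2^(n+1)" using assms(9) NN by simp
  have P0: "P 0" unfolding P_def Q_def
    by (subst P_iff[OF _ s0]) (use assms(8) xs in auto)
  have Phigh: "\<not> P l" if "l > k" for l
  proof -
    have "n+1-l \<le> n-k" using that by simp
    hence "(2::real)^(n+1-l) \<le> 2^(n-k)" by (intro power_increasing) auto
    moreover have "(2::real)^(n-k) * 2 = L" unfolding L_def using kn
      by (metis Suc_diff_le Suc_eq_plus1 power_Suc2)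
    ultimately have "(2::real)^(n+1-l) < s" using Ls by linarith
    thus ?thesis unfolding P_def Q_def by (rule P_high[OF _ s0])
  qed
  have lev_def: "cdag_level n c Q = (GREATEST l. l \<le> n + 1 \<and> P l)"
    unfolding cdag_level_def P_def ..
  have Ple: "y \<le> k" if "P y" for y using Phigh[of y] that by (meson not_less)
  have levk: "P k \<Longrightarrow> cdag_level n c Q = k"
    unfolding lev_def using kn Ple by (intro Greatest_equality) auto
  have levk1: "\<not> P k \<Longrightarrow> cdag_level n c Q = k - 1 \<and> k \<ge> 1"
  proof -
    assume nP: "\<not> P k"
    hence k1: "k \<ge> 1" using P0 by (cases k) auto
    have "P (k-1)" unfolding P_def Q_def
    proof (rule P_cover[OF c3 _ s0 _ assms(8) xs])
      show "k - 1 \<le> n + 1" using kn by simp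
      have e: "n+1-(k-1) = Suc (n+1-k)" using kn k1 by simp
      have "(2::real)^(n+1-(k-1)) = 2 * L" unfolding L_def e by (rule power_Suc)
      thus "2 * s \<le> 2^(n+1-(k-1))" using sL by simp
    qed
    moreover have "y \<le> k - 1" if "P y" for y
    proof -
      have "y \<le> k" using Ple that by blast
      moreover have "y \<noteq> k" using that nP by auto
      ultimately show ?thesis by simp
    qed
    ultimately have "cdag_level n c Q = k - 1" unfolding lev_def
      by (intro Greatest_equality) (use kn in auto)
    thus ?thesis using k1 by simp
  qed
  define Mn where "Mn = (c-1)*2^k-(c-1)"
  have Mi: "int Mn = (int c - 1) * 2 ^ nat \<kappa> - (int c - 1)"
  proof -
    have "(c-1) \<le> (c-1)*2^k" by simp
    hence "int Mn = int ((c-1)*2^k) - int (c-1)" unfolding Mn_def by (rule of_nat_diff)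
    thus ?thesis using c3 k_def by (simp add: of_nat_diff)
  qed
  have MLe: "real Mn * u + L = 2^(n+1)" unfolding Mn_def uu L_def by (rule M_eq[OF c3]) (use kn in simp)
  have mu: "real_of_int (m + int c - 1) * u = real_of_int m * u + L" for m
  proof -
    have "real_of_int (m + int c - 1) * u = real_of_int m * u + (real c - 1) * u"
      by (simp add: algebra_simps)
    thus ?thesis using uL by simp
  qed
  have Pk: "P k \<longleftrightarrow> (\<exists>m::int. 0 \<le> m \<and> m \<le> int Mn \<and> real_of_int m * u \<le> x \<and> x + s \<le> real_of_int m * u + L)"
  proof -
    have "P k \<longleftrightarrow> (\<exists>m::nat. m \<le> Mn \<and> real m * u \<le> x \<and> x + s \<le> real m * u + L)"
      unfolding P_def Q_def Mn_def uu L_def by (subst P_iff[OF _ s0]) (use kn in simp_all)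
    also have "\<dots> \<longleftrightarrow> (\<exists>m::int. 0 \<le> m \<and> m \<le> int Mn \<and> real_of_int m * u \<le> x \<and> x + s \<le> real_of_int m * u + L)"
    proof
      assume "\<exists>m::nat. m \<le> Mn \<and> real m * u \<le> x \<and> x + s \<le> real m * u + L"
      then obtain m :: nat where "m \<le> Mn \<and> real m * u \<le> x \<and> x + s \<le> real m * u + L" by blast
      thus "\<exists>m::int. 0 \<le> m \<and> m \<le> int Mn \<and> real_of_int m * u \<le> x \<and> x + s \<le> real_of_int m * u + L"
        by (intro exI[of _ "int m"]) simp
    next
      assume "\<exists>m::int. 0 \<le> m \<and> m \<le> int Mn \<and> real_of_int m * u \<le> x \<and> x + s \<le> real_of_int m * u + L"
      then obtain m :: int where m: "0 \<le> m \<and> m \<le> int Mn \<and> real_of_int m * u \<le> x \<and> x + s \<le> real_of_int m * u + L" by blast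
      hence "real (nat m) = real_of_int m" by simp
      thus "\<exists>m::nat. m \<le> Mn \<and> real m * u \<le> x \<and> x + s \<le> real m * u + L"
        using m by (intro exI[of _ "nat m"]) auto
    qed
    finally show ?thesis .
  qed
  have gap: "(\<not> P k) \<longleftrightarrow> (\<exists>m::int. 0 \<le> m \<and> m \<le> int Mn - 1 \<and> real_of_int m * u + L - s < x \<and> x < real_of_int (m+1) * u)"
    unfolding Pk by (rule gap_iff[OF u0 assms(8) _ ]) (use MLe xs in simp_all)
  have S3: "(\<exists>m::int. 0 \<le> m \<and> m \<le> (int c - 1) * 2 ^ nat \<kappa> - (int c - 1) \<and>
              real_of_int m * u \<le> x \<and> x \<le> real_of_int (m + int c - 1) * u - s) \<longleftrightarrow> P k"
    unfolding Pk Mi[symmetric] mu by (intro ex_cong1) auto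
  have S4: "(\<exists>m::int. 0 \<le> m \<and> m \<le> (int c - 1) * 2 ^ nat \<kappa> - int c \<and>
              real_of_int (m + int c - 1) * u - s < x \<and> x < real_of_int (m + 1) * u) \<longleftrightarrow> \<not> P k"
  proof -
    have "(int c - 1) * 2 ^ nat \<kappa> - int c = int Mn - 1" using Mi by simp
    thus ?thesis unfolding gap mu by (intro ex_cong1) auto
  qed
  have S2: "(\<exists>I\<in>cdag_nodes n c (nat \<kappa>). {x..<x + s} \<subseteq> I) \<longleftrightarrow> P k"
    unfolding P_def Q_def k_def ..
  show ?thesis
  proof (cases "P k")
    case True
    then show ?thesis using levk S2 S3 S4 kk unfolding Q_def by simp
  next
    case False
    then show ?thesis using levk1 S2 S3 S4 kk unfolding Q_def by auto
  qed
qed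

end
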